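(* Let $\mathbf H\in\mathbb R^{m\times d}$, $\mathbf y\in\mathbb R^m$, $\mathbf w_1,\ldots,\mathbf w_p\in\mathbb R^d$, and let $\psi_i\colon\mathbb R\to\mathbb R$, $i=1,\ldots,p$, be convex functions. If $\operatorname{argmin}_{t\in\mathbb R}\psi_i(t)\neq\emptyset$ for all $i=1,\ldots,p$, then $$\operatorname*{argmin}_{\mathbf x\in\mathbb R^d}\ \frac12\|\mathbf H\mathbf x-\mathbf y\|_2^2+\sum_{i=1}^p\psi_i(\mathbf w_i^T\mathbf x)\neq\emptyset .$$ *)

theory Defs
  imports "HOL-Analysis.Analysis"
begin

end

theory Submission
  imports Defs
begin


lemma flat_lemma:
  fixes \<psi> :: "real \<Rightarrow> real"
  assumes conv: "convex_on UNIV \<psi>" and mn: "\<forall>s. \<psi> c \<le> \<psi> s"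
    and bnd: "\<forall>s\<ge>0. \<psi> (a + s*b) \<le> B" and b: "b \<noteq> 0" and tc: "b*(t-c) \<ge> 0"
  shows "\<psi> t = \<psi> c"
proof (rule ccontr)
  assume ne: "\<psi> t \<noteq> \<psi> c"
  define d where "d = \<psi> t - \<psi> c"
  have d: "d > 0" using ne mn unfolding d_def by (metis diff_gt_0_iff_gt order_le_less)
  have "t \<noteq> c" using ne by auto
  then have btc: "b*(t-c) > 0" using tc b by (simp add: order_le_less)
  define e where "e = (t-c)/b"
  define f where "f = (c-a)/b"
  have "e = b*(t-c)/b^2" unfolding e_def using b by (simp add: power2_eq_square)
  then have e: "e > 0" using btc b by simp
  define l where "l = 1 + \<bar>f\<bar>/e + \<bar>B - \<psi> c\<bar>/d"
  have l1: "l \<ge> 1" unfolding l_def using e d by simp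
  have "l*e \<ge> \<bar>f\<bar>"
  proof -
    have "l*e = e + \<bar>f\<bar> + \<bar>B - \<psi> c\<bar>/d*e" unfolding l_def using e by (simp add: field_simps)
    moreover have "\<bar>B - \<psi> c\<bar>/d*e \<ge> 0" using d e by simp
    ultimately show ?thesis using e by linarith
  qed
  then have s0: "f + l*e \<ge> 0" by linarith
  have ld: "l*d > B - \<psi> c"
  proof -
    have "l*d = d + \<bar>f\<bar>/e*d + \<bar>B - \<psi> c\<bar>" unfolding l_def using d by (simp add: field_simps)
    moreover have "\<bar>f\<bar>/e*d \<ge> 0" using d e by simp
    ultimately show ?thesis using d by linarith
  qed
  define T where "T = c + l*(t-c)"
  have T: "T = a + (f + l*e)*b" unfolding T_def f_def e_def using b by (simp add: field_simps)
  have BT: "\<psi> T \<le> B" using bnd s0 T by auto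
  define \<mu> where "\<mu> = 1/l"
  have mu: "0 \<le> \<mu>" "\<mu> \<le> 1" unfolding \<mu>_def using l1 by auto
  have "t = (1-\<mu>) *\<^sub>R c + \<mu> *\<^sub>R T" unfolding \<mu>_def T_def using l1 by (simp add: field_simps)
  then have "\<psi> t \<le> (1-\<mu>) * \<psi> c + \<mu> * \<psi> T" using convex_onD[OF conv, of \<mu> c T] mu by simp
  also have "\<dots> \<le> (1-\<mu>) * \<psi> c + \<mu> * B" using BT mu by (simp add: mult_left_mono)
  finally have "d \<le> \<mu> * (B - \<psi> c)" unfolding d_def by (simp add: algebra_simps)
  then have "l * d \<le> B - \<psi> c" unfolding \<mu>_def using l1 by (simp add: field_simps)
  then show False using ld by linarith
qed



definition Fobj :: "real^'d^'m \<Rightarrow> real^'m \<Rightarrow> (nat \<Rightarrow> real^'d) \<Rightarrow> (nat \<Rightarrow> real \<Rightarrow> real) \<Rightarrow> nat set \<Rightarrow> real^'d \<Rightarrow> real"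
  where "Fobj H y w \<psi> I x = (1/2) * (norm (H *v x - y))\<^sup>2 + (\<Sum>i\<in>I. \<psi> i (w i \<bullet> x))"

lemma sq_convex:
  fixes p q t :: real assumes "0 \<le> t" "t \<le> 1"
  shows "((1-t)*p + t*q)^2 \<le> (1-t)*p^2 + t*q^2"
proof -
  have "(1-t)*p^2 + t*q^2 - ((1-t)*p + t*q)^2 = t*(1-t)*(p-q)^2"
    by (simp add: power2_eq_square algebra_simps)
  moreover have "t*(1-t)*(p-q)^2 \<ge> 0" using assms by simp
  ultimately show ?thesis by linarith
qed

lemma Fobj_convex:
  fixes H :: "real^'d^'m" and y :: "real^'m" and w :: "nat \<Rightarrow> real^'d"
  assumes "\<And>i. i \<in> I \<Longrightarrow> convex_on UNIV (\<psi> i)"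
  shows "convex_on UNIV (Fobj H y w \<psi> I)"
proof (rule convex_onI)
  fix t :: real and a b :: "real^'d"
  assume t: "0 < t" "t < 1"
  let ?u = "H *v a - y" and ?v = "H *v b - y"
  have eq: "H *v ((1-t) *\<^sub>R a + t *\<^sub>R b) - y = (1-t) *\<^sub>R ?u + t *\<^sub>R ?v"
    by (simp add: matrix_vector_right_distrib matrix_vector_mult_scaleR algebra_simps)
  have "norm (H *v ((1-t) *\<^sub>R a + t *\<^sub>R b) - y) \<le> (1-t) * norm ?u + t * norm ?v"
    unfolding eq using t by (metis (no_types, lifting) abs_of_nonneg diff_ge_0_iff_ge less_eq_real_def norm_scaleR norm_triangle_ineq)
  then have "(norm (H *v ((1-t) *\<^sub>R a + t *\<^sub>R b) - y))^2 \<le> ((1-t) * norm ?u + t * norm ?v)^2"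
    by (simp add: power_mono)
  also have "\<dots> \<le> (1-t) * (norm ?u)^2 + t * (norm ?v)^2" using sq_convex t by simp
  finally have q: "(1/2)*(norm (H *v ((1-t) *\<^sub>R a + t *\<^sub>R b) - y))^2 \<le> (1-t) * ((1/2)*(norm ?u)^2) + t * ((1/2)*(norm ?v)^2)"
    by simp
  have s: "(\<Sum>i\<in>I. \<psi> i (w i \<bullet> ((1-t) *\<^sub>R a + t *\<^sub>R b))) \<le> (\<Sum>i\<in>I. (1-t) * \<psi> i (w i \<bullet> a) + t * \<psi> i (w i \<bullet> b))"
  proof (rule sum_mono)
    fix i assume i: "i \<in> I"
    have "w i \<bullet> ((1-t) *\<^sub>R a + t *\<^sub>R b) = (1-t) *\<^sub>R (w i \<bullet> a) + t *\<^sub>R (w i \<bullet> b)"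
      by (simp add: inner_add_right)
    then show "\<psi> i (w i \<bullet> ((1-t) *\<^sub>R a + t *\<^sub>R b)) \<le> (1-t) * \<psi> i (w i \<bullet> a) + t * \<psi> i (w i \<bullet> b)"
      using convex_onD[OF assms[OF i], of t] t by simp
  qed
  show "Fobj H y w \<psi> I ((1-t) *\<^sub>R a + t *\<^sub>R b) \<le> (1-t) * Fobj H y w \<psi> I a + t * Fobj H y w \<psi> I b"
  proof -
    have e: "(\<Sum>i\<in>I. (1-t) * \<psi> i (w i \<bullet> a) + t * \<psi> i (w i \<bullet> b)) = (1-t) * (\<Sum>i\<in>I. \<psi> i (w i \<bullet> a)) + t * (\<Sum>i\<in>I. \<psi> i (w i \<bullet> b))"
      by (simp add: sum.distrib sum_distrib_left)
    have e2: "(1-t) * Fobj H y w \<psi> I a + t * Fobj H y w \<psi> I b = (1-t) * ((1/2)*(norm ?u)^2) + t * ((1/2)*(norm ?v)^2) + ((1-t) * (\<Sum>i\<in>I. \<psi> i (w i \<bullet> a)) + t * (\<Sum>i\<in>I. \<psi> i (w i \<bullet> b)))"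
      unfolding Fobj_def by (simp add: algebra_simps)
    show ?thesis using q s e e2 unfolding Fobj_def by linarith
  qed
qed simp

lemma Fobj_cont:
  fixes H :: "real^'d^'m" and y :: "real^'m" and w :: "nat \<Rightarrow> real^'d"
  assumes "\<And>i. i \<in> I \<Longrightarrow> convex_on UNIV (\<psi> i)"
  shows "continuous_on UNIV (Fobj H y w \<psi> I)"
proof -
  have c: "continuous_on UNIV (\<psi> i)" if "i \<in> I" for i
    using convex_on_continuous[OF open_UNIV assms[OF that]] .
  have "continuous_on UNIV (\<lambda>x. \<psi> i (w i \<bullet> x))" if "i \<in> I" for i
  proof -
    have "continuous_on UNIV (\<lambda>x. w i \<bullet> x)" by (intro continuous_intros)
    then show ?thesis using continuous_on_compose2[OF c[OF that], of UNIV "\<lambda>x. w i \<bullet> x"] by simp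
  qed
  then show ?thesis unfolding Fobj_def
    by (auto intro!: continuous_intros continuous_on_sum)
qed

lemma ray_lemma:
  fixes K :: "'a::euclidean_space set"
  assumes "closed K" "convex K" "0 \<in> K" "\<not> bounded K"
  obtains v where "v \<noteq> 0" "\<And>t. t \<ge> 0 \<Longrightarrow> t *\<^sub>R v \<in> K"
proof -
  have "\<forall>n::nat. \<exists>x\<in>K. norm x > real n" using assms(4) unfolding bounded_iff
    by (meson not_le)
  then obtain x where x: "\<And>n. x n \<in> K" "\<And>n. norm (x n) > real n" by metis
  define u where "u n = x n /\<^sub>R norm (x n)" for n
  have nx: "norm (x n) > 0" for n using x(2)[of n] by (metis of_nat_0_le_iff order_le_less_trans)
  have "u n \<in> sphere 0 1" for n unfolding u_def using nx[of n] by simp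
  then obtain v r where v: "v \<in> sphere 0 1" "strict_mono r" "(u \<circ> r) \<longlonglongrightarrow> v"
    using compact_sphere[of "0::'a" 1] unfolding compact_def by metis
  have "v \<noteq> 0" using v(1) by auto
  moreover have "t *\<^sub>R v \<in> K" if t: "t \<ge> 0" for t
  proof (rule Lim_in_closed_set[OF assms(1)])
    show "((\<lambda>n. t *\<^sub>R (u \<circ> r) n) \<longlongrightarrow> t *\<^sub>R v) sequentially"
      using v(3) by (intro tendsto_intros)
    show "sequentially \<noteq> bot" by simp
    obtain N :: nat where N: "t \<le> real N" using real_arch_simple by blast
    show "\<forall>\<^sub>F n in sequentially. t *\<^sub>R (u \<circ> r) n \<in> K"
    proof (rule eventually_sequentiallyI[of N])
      fix n assume n: "N \<le> n"
      have "real N \<le> real (r n)" using seq_suble[OF v(2), of n] n by simp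
      then have tl: "t \<le> norm (x (r n))" using N x(2)[of "r n"] by linarith
      let ?m = "t / norm (x (r n))"
      have m: "0 \<le> ?m" "?m \<le> 1" using tl t nx[of "r n"] by auto
      have "(1 - ?m) *\<^sub>R 0 + ?m *\<^sub>R x (r n) \<in> K"
        using convexD[OF assms(2) assms(3) x(1)[of "r n"], of "1-?m" ?m] m by simp
      then show "t *\<^sub>R (u \<circ> r) n \<in> K" unfolding u_def by (simp add: divide_inverse)
    qed
  qed
  ultimately show ?thesis using that by blast
qed



lemma abs_sq_aux: fixes x b :: real assumes "b \<noteq> 0" shows "x / \<bar>b\<bar> * b^2 = x * \<bar>b\<bar>"
proof (cases "b > 0")
  case True then show ?thesis by (simp add: power2_eq_square)
next
  case False then have "b < 0" using assms by simp
  then show ?thesis by (simp add: power2_eq_square)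
qed

lemma main_lemma:
  fixes H :: "real^'d^'m" and y :: "real^'m" and w :: "nat \<Rightarrow> real^'d" and \<psi> :: "nat \<Rightarrow> real \<Rightarrow> real"
  assumes "finite I" "\<forall>i\<in>I. convex_on UNIV (\<psi> i)" "\<forall>i\<in>I. \<exists>c. \<forall>s. \<psi> i c \<le> \<psi> i s"
  shows "\<exists>x. \<forall>z. Fobj H y w \<psi> I x \<le> Fobj H y w \<psi> I z"
  using assms
proof (induction "card I" arbitrary: I rule: less_induct)
  case less
  obtain c where c: "\<forall>i\<in>I. \<forall>s. \<psi> i (c i) \<le> \<psi> i s" using less.prems(3) by metis
  define F where "F = Fobj H y w \<psi> I"
  define N where "N = {n. H *v n = 0 \<and> (\<forall>i\<in>I. w i \<bullet> n = 0)}"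
  define S where "S = {x. \<forall>n\<in>N. x \<bullet> n = 0}"
  have subN: "subspace N" unfolding N_def subspace_def
    by (auto simp: matrix_vector_right_distrib matrix_vector_mult_scaleR inner_add_right)
  have decomp: "\<exists>s\<in>S. F x = F s" for x
  proof -
    obtain a b where ab: "a \<in> span N" "\<And>u. u \<in> span N \<Longrightarrow> orthogonal b u" "x = a + b"
      using orthogonal_subspace_decomp_exists[of N x] by metis
    have aN: "a \<in> N" using ab(1) subN by (metis span_eq_iff)
    have bS: "b \<in> S" unfolding S_def using ab(2) span_base unfolding orthogonal_def by blast
    have "F x = F b" unfolding F_def Fobj_def ab(3) using aN unfolding N_def
      by (simp add: matrix_vector_right_distrib inner_add_right)
    then show ?thesis using bS by blast
  qed
  have Fconv: "convex_on UNIV F" unfolding F_def using Fobj_convex less.prems(2) by blast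
  have Fcont: "continuous_on UNIV F" unfolding F_def using Fobj_cont less.prems(2) by blast
  have closedS: "closed S"
  proof -
    have "S = (\<Inter>n\<in>N. {x. x \<bullet> n = 0})" unfolding S_def by auto
    moreover have "closed {x. x \<bullet> n = 0}" for n :: "real^'d"
      using closed_hyperplane[of n 0] by (simp add: inner_commute)
    ultimately show ?thesis by auto
  qed
  have subS: "subspace S" unfolding S_def subspace_def by (auto simp: inner_add_left)
  define K where "K = S \<inter> {x. F x \<le> F 0}"
  have closedK: "closed K" unfolding K_def
    using closedS closed_Collect_le[OF Fcont continuous_on_const] by blast
  have convK: "convex K" unfolding K_def
  proof (rule convex_Int)
    show "convex S" using subS by (simp add: subspace_imp_convex)
    show "convex {x. F x \<le> F 0}"
    proof (rule convexI)
      fix a b :: "real^'d" and u v :: real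
      assume "a \<in> {x. F x \<le> F 0}" "b \<in> {x. F x \<le> F 0}" "0 \<le> u" "0 \<le> v" "u + v = 1"
      then have u: "u = 1 - v" and h: "F a \<le> F 0" "F b \<le> F 0" "0 \<le> v" "v \<le> 1" by auto
      have "F ((1 - v) *\<^sub>R a + v *\<^sub>R b) \<le> (1 - v) * F a + v * F b"
        using convex_onD[OF Fconv, of v a b] h by simp
      also have "\<dots> \<le> (1 - v) * F 0 + v * F 0"
        using h by (intro add_mono mult_left_mono) auto
      also have "\<dots> = F 0" by (simp add: algebra_simps)
      finally have "F ((1 - v) *\<^sub>R a + v *\<^sub>R b) \<le> F 0" .
      then show "u *\<^sub>R a + v *\<^sub>R b \<in> {x. F x \<le> F 0}" using u by simp
    qed
  qed
  have K0: "0 \<in> K" unfolding K_def S_def by simp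
  have Fge: "F x \<ge> (\<Sum>i\<in>I. \<psi> i (c i))" for x
  proof -
    have "(\<Sum>i\<in>I. \<psi> i (c i)) \<le> (\<Sum>i\<in>I. \<psi> i (w i \<bullet> x))" using c by (intro sum_mono) auto
    moreover have "0 \<le> (1/2) * (norm (H *v x - y))^2" by simp
    ultimately show ?thesis unfolding F_def Fobj_def by linarith
  qed
  show ?case
  proof (cases "bounded K")
    case True
    then have "compact K" using closedK by (simp add: compact_eq_bounded_closed)
    then obtain x where x: "x \<in> K" "\<And>z. z \<in> K \<Longrightarrow> F x \<le> F z"
      using continuous_attains_inf[of K F] K0 continuous_on_subset[OF Fcont] by blast
    have "F x \<le> F z" for z
    proof -
      obtain s where s: "s \<in> S" "F z = F s" using decomp by blast
      show ?thesis
      proof (cases "F s \<le> F 0")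
        case True then show ?thesis using x(2)[of s] s unfolding K_def by auto
      next
        case False then show ?thesis using x(2)[OF K0] s by auto
      qed
    qed
    then show ?thesis unfolding F_def by blast
  next
    case False
    then obtain v where v: "v \<noteq> 0" "\<And>t. t \<ge> 0 \<Longrightarrow> t *\<^sub>R v \<in> K"
      using ray_lemma[OF closedK convK K0] by blast
    have vS: "v \<in> S" using v(2)[of 1] unfolding K_def by simp
    have Fray: "F (t *\<^sub>R v) \<le> F 0" if "t \<ge> 0" for t using v(2)[OF that] unfolding K_def by simp
    define B where "B = F 0 - (\<Sum>i\<in>I. \<psi> i (c i))"
    have Hv: "H *v v = 0"
    proof (rule ccontr)
      assume nz: "H *v v \<noteq> 0"
      have qb: "(1/2) * (norm (t *\<^sub>R (H *v v) - y))^2 \<le> B" if "t \<ge> 0" for t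
      proof -
        have "(\<Sum>i\<in>I. \<psi> i (c i)) \<le> (\<Sum>i\<in>I. \<psi> i (w i \<bullet> (t *\<^sub>R v)))" using c by (intro sum_mono) auto
        then show ?thesis using Fray[OF that] unfolding B_def F_def Fobj_def
          by (simp add: matrix_vector_mult_scaleR)
      qed
      have "0 \<le> (1/2) * (norm ((0::real) *\<^sub>R (H *v v) - y))^2" by simp
      then have B0: "B \<ge> 0" using qb[of 0] by linarith
      define t where "t = (norm y + 2*B + 1) / norm (H *v v)"
      have np: "norm (H *v v) > 0" using nz by simp
      have t0: "t \<ge> 0" unfolding t_def using np B0 by simp
      have "t * norm (H *v v) = norm y + 2*B + 1" unfolding t_def using np by simp
      moreover have "norm (t *\<^sub>R (H *v v)) \<le> norm (t *\<^sub>R (H *v v) - y) + norm y"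
        using norm_triangle_ineq[of "t *\<^sub>R (H *v v) - y" y] by simp
      ultimately have "2*B + 1 \<le> norm (t *\<^sub>R (H *v v) - y)" using t0 by simp
      then have "(2*B+1)^2 \<le> (norm (t *\<^sub>R (H *v v) - y))^2" using B0 by (simp add: power_mono)
      moreover have "(2*B+1)^2 \<ge> 2*B + 1" using B0 by (simp add: power2_eq_square)
      ultimately show False using qb[OF t0] by linarith
    qed
    have flat: "\<psi> i t = \<psi> i (c i)" if i: "i \<in> I" and wv: "w i \<bullet> v \<noteq> 0" and tc: "(w i \<bullet> v) * (t - c i) \<ge> 0" for i t
    proof (rule flat_lemma[where \<psi>="\<psi> i" and c="c i" and a=0 and b="w i \<bullet> v" and B="F 0 - (\<Sum>j\<in>I-{i}. \<psi> j (c j))"])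
      show "convex_on UNIV (\<psi> i)" using less.prems(2) i by blast
      show "\<forall>s. \<psi> i (c i) \<le> \<psi> i s" using c i by blast
      show "\<forall>s\<ge>0. \<psi> i (0 + s * (w i \<bullet> v)) \<le> F 0 - (\<Sum>j\<in>I-{i}. \<psi> j (c j))"
      proof (intro allI impI)
        fix s :: real assume s: "s \<ge> 0"
        have "(\<Sum>j\<in>I-{i}. \<psi> j (c j)) \<le> (\<Sum>j\<in>I-{i}. \<psi> j (w j \<bullet> (s *\<^sub>R v)))" using c by (intro sum_mono) auto
        moreover have "(\<Sum>j\<in>I. \<psi> j (w j \<bullet> (s *\<^sub>R v))) = \<psi> i (w i \<bullet> (s *\<^sub>R v)) + (\<Sum>j\<in>I-{i}. \<psi> j (w j \<bullet> (s *\<^sub>R v)))"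
          using sum.remove[OF less.prems(1) i] by blast
        moreover have "F (s *\<^sub>R v) = (1/2) * (norm (H *v (s *\<^sub>R v) - y))^2 + (\<Sum>j\<in>I. \<psi> j (w j \<bullet> (s *\<^sub>R v)))"
          unfolding F_def Fobj_def by simp
        moreover have "(1/2) * (norm (H *v (s *\<^sub>R v) - y))^2 \<ge> 0" by simp
        ultimately have "\<psi> i (w i \<bullet> (s *\<^sub>R v)) \<le> F 0 - (\<Sum>j\<in>I-{i}. \<psi> j (c j))"
          using Fray[OF s] by linarith
        then show "\<psi> i (0 + s * (w i \<bullet> v)) \<le> F 0 - (\<Sum>j\<in>I-{i}. \<psi> j (c j))" by simp
      qed
    qed (use wv tc in auto)
    define I0 where "I0 = {i\<in>I. w i \<bullet> v = 0}"
    have I0sub: "I0 \<subseteq> I" unfolding I0_def by auto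
    have "I0 \<noteq> I"
    proof
      assume "I0 = I"
      then have "v \<in> N" unfolding N_def I0_def using Hv by auto
      then have "v \<bullet> v = 0" using vS unfolding S_def by blast
      then show False using v(1) by simp
    qed
    then have "card I0 < card I" using I0sub less.prems(1) by (meson psubsetI psubset_card_mono)
    moreover have "finite I0" using I0sub less.prems(1) finite_subset by blast
    ultimately obtain xs where xs: "\<forall>z. Fobj H y w \<psi> I0 xs \<le> Fobj H y w \<psi> I0 z"
      using less.hyps[of I0] less.prems I0sub by blast
    define J where "J = I - I0"
    have finJ: "finite J" unfolding J_def using less.prems(1) by simp
    define s where "s = (\<Sum>i\<in>J. \<bar>w i \<bullet> xs - c i\<bar> / \<bar>w i \<bullet> v\<bar>)"
    have atmin: "\<psi> i (w i \<bullet> (xs + s *\<^sub>R v)) = \<psi> i (c i)" if i: "i \<in> J" for i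
    proof -
      have iI: "i \<in> I" and wv: "w i \<bullet> v \<noteq> 0" using i unfolding J_def I0_def by auto
      let ?a = "w i \<bullet> xs" and ?b = "w i \<bullet> v"
      have sge: "s \<ge> \<bar>?a - c i\<bar> / \<bar>?b\<bar>" unfolding s_def
        by (rule member_le_sum[OF i _ finJ]) simp
      have bp: "\<bar>?b\<bar> > 0" using wv by simp
      have "s * ?b^2 \<ge> \<bar>?a - c i\<bar> / \<bar>?b\<bar> * ?b^2" using sge by (intro mult_right_mono) auto
      also have "\<bar>?a - c i\<bar> / \<bar>?b\<bar> * ?b^2 = \<bar>?a - c i\<bar> * \<bar>?b\<bar>"
        by (rule abs_sq_aux[OF wv])
      finally have "s * ?b^2 \<ge> \<bar>?a - c i\<bar> * \<bar>?b\<bar>" .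
      moreover have "\<bar>?a - c i\<bar> * \<bar>?b\<bar> \<ge> - (?b * (?a - c i))"
      proof -
        have "\<bar>?a - c i\<bar> * \<bar>?b\<bar> = \<bar>?b * (?a - c i)\<bar>" by (simp add: abs_mult)
        then show ?thesis using abs_ge_minus_self[of "?b * (?a - c i)"] by linarith
      qed
      moreover have "?b * (?a + s * ?b - c i) = ?b * (?a - c i) + s * ?b^2"
        by (simp add: power2_eq_square algebra_simps)
      ultimately have "?b * (?a + s * ?b - c i) \<ge> 0" by linarith
      moreover have "w i \<bullet> (xs + s *\<^sub>R v) = ?a + s * ?b" by (simp add: inner_add_right)
      ultimately show ?thesis using flat[OF iI wv, of "?a + s * ?b"] by simp
    qed
    have sumsplit: "(\<Sum>i\<in>I. g i) = (\<Sum>i\<in>J. g i) + (\<Sum>i\<in>I0. g i)" for g :: "nat \<Rightarrow> real"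
      unfolding J_def using sum.subset_diff[OF I0sub less.prems(1)] by simp
    have Fxs: "F (xs + s *\<^sub>R v) = Fobj H y w \<psi> I0 xs + (\<Sum>i\<in>J. \<psi> i (c i))"
    proof -
      have "(\<Sum>i\<in>I0. \<psi> i (w i \<bullet> (xs + s *\<^sub>R v))) = (\<Sum>i\<in>I0. \<psi> i (w i \<bullet> xs))"
        unfolding I0_def by (intro sum.cong) (auto simp: inner_add_right)
      moreover have "(\<Sum>i\<in>J. \<psi> i (w i \<bullet> (xs + s *\<^sub>R v))) = (\<Sum>i\<in>J. \<psi> i (c i))"
        using atmin by (intro sum.cong) auto
      moreover have "H *v (xs + s *\<^sub>R v) = H *v xs" using Hv
        by (simp add: matrix_vector_right_distrib matrix_vector_mult_scaleR)
      moreover have "F (xs + s *\<^sub>R v) = (1/2) * (norm (H *v (xs + s *\<^sub>R v) - y))\<^sup>2 + (\<Sum>i\<in>J. \<psi> i (w i \<bullet> (xs + s *\<^sub>R v))) + (\<Sum>i\<in>I0. \<psi> i (w i \<bullet> (xs + s *\<^sub>R v)))"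
        unfolding F_def Fobj_def using sumsplit[of "\<lambda>i. \<psi> i (w i \<bullet> (xs + s *\<^sub>R v))"] by linarith
      ultimately show ?thesis unfolding Fobj_def by (simp only:)
    qed
    have "F (xs + s *\<^sub>R v) \<le> F z" for z
    proof -
      have "(\<Sum>i\<in>J. \<psi> i (c i)) \<le> (\<Sum>i\<in>J. \<psi> i (w i \<bullet> z))"
        using c unfolding J_def by (intro sum_mono) auto
      moreover have "F z = Fobj H y w \<psi> I0 z + (\<Sum>i\<in>J. \<psi> i (w i \<bullet> z))"
        unfolding F_def Fobj_def using sumsplit[of "\<lambda>i. \<psi> i (w i \<bullet> z)"] by linarith
      moreover have "Fobj H y w \<psi> I0 xs \<le> Fobj H y w \<psi> I0 z" using xs by blast
      ultimately show ?thesis using Fxs by linarith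
    qed
    then show ?thesis unfolding F_def by blast
  qed
qed


theorem proposition1:
  fixes H :: "real^'d^'m" and y :: "real^'m"
    and p :: nat and w :: "nat \<Rightarrow> real^'d" and \<psi> :: "nat \<Rightarrow> real \<Rightarrow> real"
  assumes "\<And>i. i \<in> {1..p} \<Longrightarrow> convex_on UNIV (\<psi> i)"
    and "\<And>i. i \<in> {1..p} \<Longrightarrow> {t. \<forall>s. \<psi> i t \<le> \<psi> i s} \<noteq> {}"
  shows "{x. \<forall>z. (1/2) * (norm (H *v x - y))\<^sup>2 + (\<Sum>i=1..p. \<psi> i (w i \<bullet> x))
               \<le> (1/2) * (norm (H *v z - y))\<^sup>2 + (\<Sum>i=1..p. \<psi> i (w i \<bullet> z))} \<noteq> {}"
proof -
  have "\<exists>x. \<forall>z. Fobj H y w \<psi> {1..p} x \<le> Fobj H y w \<psi> {1..p} z"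
    using assms by (intro main_lemma) auto
  then show ?thesis unfolding Fobj_def by auto
qed

end
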